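(* Let $K$ be a connected simplicial complex with $d$ vertices $v_1,\ldots,v_d$. Let $0\leq a_1<\cdots<a_d$ be integers such that whenever $a_j-a_i=a_{j'}-a_{i'}$ (for indices $i,j,i',j'\in\{1,\ldots,d\}$) we have $i=j$ or $j=j'$. Let $n>2a_d$ be an integer coprime to all differences $a_j-a_i$ with $j>i$. Let $\widetilde{K}$ be the simplicial complex with vertex set $\mathbb{Z}/n$ whose faces are all sets of the form $\{x+a_{i_1},\ldots,x+a_{i_k}\}$ (addition modulo $n$) where $x\in\mathbb{Z}/n$ and $\{v_{i_1},\ldots,v_{i_k}\}$ is a face of $K$. Then $\widetilde{K}$ is a cluster of $n$ subcomplexes, each isomorphic to $K$.
   Context: A finite simplicial complex $X$ is a cluster of $X_1,\ldots,X_k$ (its parts) if $X_1,\ldots,X_k$ are induced subcomplexes of $X$ with $X=X_1\cup\cdots\cup X_k$ and such that for all $i\neq j$ the intersection $X_i\cap X_j$ is either empty or consists of a single vertex. *)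

theory Defs
  imports Main "HOL-Computational_Algebra.Primes"
begin

definition simplicial_complex :: "'v set set \<Rightarrow> bool" where
  "simplicial_complex X \<longleftrightarrow>
     (\<forall>F\<in>X. finite F \<and> F \<noteq> {} \<and> (\<forall>G. G \<subseteq> F \<and> G \<noteq> {} \<longrightarrow> G \<in> X))"

definition vertices :: "'v set set \<Rightarrow> 'v set" where
  "vertices X = \<Union>X"

definition edge_rel :: "'v set set \<Rightarrow> ('v \<times> 'v) set" where
  "edge_rel X = {(u, v). {u, v} \<in> X}"

definition connected_complex :: "'v set set \<Rightarrow> bool" where
  "connected_complex X \<longleftrightarrow>
     (\<forall>u\<in>vertices X. \<forall>v\<in>vertices X. (u, v) \<in> (edge_rel X)\<^sup>*)"

definition induced_subcomplex :: "'v set set \<Rightarrow> 'v set set \<Rightarrow> bool" where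
  "induced_subcomplex Y X \<longleftrightarrow> Y \<subseteq> X \<and> Y = {F \<in> X. F \<subseteq> vertices Y}"

definition is_cluster :: "'v set set \<Rightarrow> (nat \<Rightarrow> 'v set set) \<Rightarrow> nat \<Rightarrow> bool" where
  "is_cluster X P k \<longleftrightarrow>
     simplicial_complex X \<and> finite X \<and>
     (\<forall>i<k. induced_subcomplex (P i) X) \<and>
     X = (\<Union>i<k. P i) \<and>
     (\<forall>i<k. \<forall>j<k. i \<noteq> j \<longrightarrow> P i \<inter> P j = {} \<or> (\<exists>v. P i \<inter> P j = {{v}}))"

definition isomorphic_complex :: "'v set set \<Rightarrow> 'w set set \<Rightarrow> bool" where
  "isomorphic_complex X Y \<longleftrightarrow>
     (\<exists>f. bij_betw f (vertices X) (vertices Y) \<and> (\<lambda>F. f ` F) ` X = Y)"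

text \<open>The complex on vertex set Z/n (represented as {0..<n}) whose faces are the sets
  {x + a i | v_i in F} mod n, for x in Z/n and F a face of K (vertices of K are indices).\<close>
definition lift_complex :: "nat \<Rightarrow> (nat \<Rightarrow> nat) \<Rightarrow> nat set set \<Rightarrow> nat set set" where
  "lift_complex n a K = {(\<lambda>i. (x + a i) mod n) ` F | x F. x < n \<and> F \<in> K}"

end

theory Submission
  imports Defs
begin

lemma small_dvd_zero:
  fixes z :: int and n :: nat
  assumes "int n dvd z" "\<bar>z\<bar> < int n" shows "z = 0"
proof (rule ccontr)
  assume "z \<noteq> 0"
  then have "\<bar>int n\<bar> \<le> \<bar>z\<bar>" using dvd_imp_le_int assms(1) by blast
  then show False using assms(2) by simp
qed

lemma modeq_int:
  fixes x y n :: nat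
  assumes "x mod n = y mod n" shows "int n dvd int x - int y"
proof -
  have "int x mod int n = int y mod int n" using assms
    by (metis of_nat_mod)
  thus ?thesis by (simp add: mod_eq_dvd_iff)
qed

lemma key:
  fixes n x y p q r s :: nat
  assumes "(x + p) mod n = (y + q) mod n" "(x + r) mod n = (y + s) mod n"
    "2*p < n" "2*q < n" "2*r < n" "2*s < n"
  shows "int q - int p = int s - int r"
proof -
  have 1: "int n dvd (int x + int p) - (int y + int q)" using modeq_int[OF assms(1)] by simp
  have 2: "int n dvd (int x + int r) - (int y + int s)" using modeq_int[OF assms(2)] by simp
  have h3: "int n dvd ((int x + int p) - (int y + int q)) - ((int x + int r) - (int y + int s))"
    using 1 2 dvd_diff by blast
  then have "int n dvd (int q - int p) - (int s - int r)"
  proof -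
    have "((int x + int p) - (int y + int q)) - ((int x + int r) - (int y + int s)) = - ((int q - int p) - (int s - int r))" by simp
    thus ?thesis using h3 by (metis dvd_minus_iff)
  qed
  moreover have "\<bar>(int q - int p) - (int s - int r)\<bar> < int n" using assms(3-6) by linarith
  ultimately have "(int q - int p) - (int s - int r) = 0" by (rule small_dvd_zero)
  then show ?thesis by simp
qed

lemma same_shift:
  fixes n x y p :: nat
  assumes "(x + p) mod n = (y + p) mod n" "x < n" "y < n" shows "x = y"
proof -
  have "int n dvd int x - int y" using modeq_int[OF assms(1)] by simp
  moreover have "\<bar>int x - int y\<bar> < int n" using assms by linarith
  ultimately have "int x - int y = 0" by (rule small_dvd_zero)
  then show ?thesis by simp
qed

lemma same_base:
  fixes n x p r :: nat
  assumes "(x + p) mod n = (x + r) mod n" "p < n" "r < n" shows "p = r"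
  using same_shift[of p x n r] assms by (simp add: add.commute)

theorem proposition3p1:
  fixes K :: "nat set set" and d n :: nat and a :: "nat \<Rightarrow> nat"
  assumes "simplicial_complex K"
    and "connected_complex K"
    and "vertices K = {1..d}"
    and "strict_mono_on {1..d} a"
    and "\<forall>i\<in>{1..d}. \<forall>j\<in>{1..d}. \<forall>i'\<in>{1..d}. \<forall>j'\<in>{1..d}.
           int (a j) - int (a i) = int (a j') - int (a i') \<longrightarrow> i = j \<or> j = j'"
    and "n > 2 * a d"
    and "\<forall>i\<in>{1..d}. \<forall>j\<in>{1..d}. i < j \<longrightarrow> coprime n (a j - a i)"
  shows "\<exists>P. is_cluster (lift_complex n a K) P n \<and> (\<forall>i<n. isomorphic_complex (P i) K)"
proof -
  note SC = assms(1)[unfolded simplicial_complex_def]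
  have SCr: "G \<in> K" if "F \<in> K" "G \<subseteq> F" "G \<noteq> {}" for F G
    using SC that by blast
  have Ksub: "F \<subseteq> {1..d}" if "F \<in> K" for F
    using that assms(3) unfolding vertices_def by blast
  have Kfin: "finite F" "F \<noteq> {}" if "F \<in> K" for F using SC that by auto
  have asmall: "2 * a i < n" if "i \<in> {1..d}" for i
  proof -
    have "a i \<le> a d"
    proof (cases "i = d")
      case False
      then have "i < d" using that by auto
      moreover have "d \<in> {1..d}" using that by auto
      ultimately have "a i < a d" using strict_mono_onD[OF assms(4) that] by blast
      then show ?thesis by simp
    qed simp
    thus ?thesis using assms(6) by linarith
  qed
  have alt: "a i < n" if "i \<in> {1..d}" for i using asmall[OF that] by linarith
  have ainj: "inj_on a {1..d}" using assms(4) strict_mono_on_imp_inj_on by blast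
  note diffc = assms(5)
  define V where "V x = (\<lambda>i. (x + a i) mod n) ` {1..d}" for x
  define P where "P x = (\<lambda>F. (\<lambda>i. (x + a i) mod n) ` F) ` K" for x
  have X: "lift_complex n a K = (\<Union>x<n. P x)"
    unfolding lift_complex_def P_def by auto
  have Cl: "y = x" if H: "x < n" "y < n" "F \<in> K" "i \<in> F" "i' \<in> F" "i \<noteq> i'"
     "(\<lambda>i. (y + a i) mod n) ` F \<subseteq> V x" for x y F i i'
  proof -
    have ii: "i \<in> {1..d}" "i' \<in> {1..d}" using Ksub[OF H(3)] H(4,5) by blast+
    obtain j where j: "j \<in> {1..d}" "(y + a i) mod n = (x + a j) mod n"
      using H(4,7) unfolding V_def by blast
    obtain j' where j': "j' \<in> {1..d}" "(y + a i') mod n = (x + a j') mod n"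
      using H(5,7) unfolding V_def by blast
    have "int (a j) - int (a i) = int (a j') - int (a i')"
      using key[OF j(2) j'(2)] asmall ii j j' by blast
    then have "i = j \<or> j = j'" using diffc ii j j' by blast
    then show ?thesis
    proof
      assume "i = j" then show ?thesis using same_shift[of y "a i" n x] j H by simp
    next
      assume "j = j'"
      then have "(y + a i) mod n = (y + a i') mod n" using j j' by simp
      then have "a i = a i'" using same_base alt ii by blast
      then show ?thesis using ainj ii H(6) unfolding inj_on_def by blast
    qed
  qed
  have Vl: "v = w" if H: "x < n" "y < n" "x \<noteq> y" "v \<in> V x" "v \<in> V y" "w \<in> V x" "w \<in> V y" for x y v w
  proof -
    obtain i j k l where ijkl: "i \<in> {1..d}" "j \<in> {1..d}" "k \<in> {1..d}" "l \<in> {1..d}"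
      "v = (x + a i) mod n" "v = (y + a j) mod n" "w = (x + a k) mod n" "w = (y + a l) mod n"
      using H(4-7) unfolding V_def by blast
    have "int (a j) - int (a i) = int (a l) - int (a k)"
      using key[of x "a i" n y "a j" "a k" "a l"] asmall ijkl by auto
    then have "i = j \<or> j = l" using diffc ijkl(1-4) by blast
    then show ?thesis
    proof
      assume "i = j" then have "x = y" using same_shift[of x "a i" n y] ijkl H by simp
      then show ?thesis using H by simp
    qed (use ijkl in simp)
  qed
  have single: "\<exists>k. F = {k}" if "F \<in> K" "\<not> (\<exists>i i'. i \<in> F \<and> i' \<in> F \<and> i \<noteq> i')" for F
    using Kfin(2)[OF that(1)] that(2) by blast
  have vertP: "vertices (P x) = V x" for x
  proof -
    have "vertices (P x) = (\<lambda>i. (x + a i) mod n) ` (\<Union>K)"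
      unfolding vertices_def P_def by auto
    thus ?thesis using assms(3) unfolding vertices_def V_def by simp
  qed
  have PX: "P x \<subseteq> lift_complex n a K" if "x < n" for x using X that by blast
  have ind: "induced_subcomplex (P x) (lift_complex n a K)" if "x < n" for x
    unfolding induced_subcomplex_def vertP
  proof (intro conjI PX[OF that] equalityI subsetI)
    fix G assume "G \<in> P x"
    then show "G \<in> {F \<in> lift_complex n a K. F \<subseteq> V x}"
      using PX[OF that] vertP[of x] unfolding vertices_def by auto
  next
    fix G assume G: "G \<in> {F \<in> lift_complex n a K. F \<subseteq> V x}"
    then obtain y F where yF: "y < n" "F \<in> K" "G = (\<lambda>i. (y + a i) mod n) ` F" "G \<subseteq> V x"
      unfolding lift_complex_def by blast
    show "G \<in> P x"
    proof (cases "\<exists>i i'. i \<in> F \<and> i' \<in> F \<and> i \<noteq> i'")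
      case True
      then have "y = x" using Cl[OF that yF(1,2)] yF by blast
      then show ?thesis using yF unfolding P_def by blast
    next
      case False
      then obtain k where k: "F = {k}" using single yF(2) by blast
      then have "(y + a k) mod n \<in> V x" using yF by auto
      then obtain j where j: "j \<in> {1..d}" "(y + a k) mod n = (x + a j) mod n"
        unfolding V_def by blast
      have "j \<in> \<Union>K" using j assms(3) unfolding vertices_def by simp
      then obtain H where "H \<in> K" "j \<in> H" by blast
      then have "{j} \<in> K" using SCr[of H "{j}"] by blast
      moreover have "G = (\<lambda>i. (x + a i) mod n) ` {j}" using yF k j by simp
      ultimately show ?thesis unfolding P_def by blast
    qed
  qed
  have inter: "P x \<inter> P y = {} \<or> (\<exists>v. P x \<inter> P y = {{v}})" if "x < n" "y < n" "x \<noteq> y" for x y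
  proof -
    have sing: "\<exists>v. G = {v} \<and> v \<in> V x \<and> v \<in> V y" if G: "G \<in> P x \<inter> P y" for G
    proof -
      obtain F where F: "F \<in> K" "G = (\<lambda>i. (x + a i) mod n) ` F" using G unfolding P_def by blast
      have GV: "G \<subseteq> V y" "G \<subseteq> V x" using G vertP unfolding vertices_def by blast+
      have "\<not> (\<exists>i i'. i \<in> F \<and> i' \<in> F \<and> i \<noteq> i')"
      proof
        assume "\<exists>i i'. i \<in> F \<and> i' \<in> F \<and> i \<noteq> i'"
        then have "x = y" using Cl[of y x F] \<open>y < n\<close> \<open>x < n\<close> F GV by blast
        then show False using \<open>x \<noteq> y\<close> by simp
      qed
      then obtain k where "F = {k}" using single F by blast
      then show ?thesis using F GV by auto
    qed
    show ?thesis
    proof (cases "P x \<inter> P y = {}")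
      case False
      then obtain G where G: "G \<in> P x \<inter> P y" by blast
      then obtain v where v: "G = {v}" "v \<in> V x" "v \<in> V y" using sing by blast
      have "P x \<inter> P y = {{v}}"
      proof (intro equalityI subsetI)
        fix H assume "H \<in> P x \<inter> P y"
        then obtain w where "H = {w}" "w \<in> V x" "w \<in> V y" using sing by blast
        then show "H \<in> {{v}}" using Vl[OF that] v by auto
      qed (use G v in auto)
      then show ?thesis by blast
    qed simp
  qed
  have scX: "simplicial_complex (lift_complex n a K)"
    unfolding simplicial_complex_def lift_complex_def
  proof (intro ballI conjI allI impI)
    fix G assume "G \<in> {(\<lambda>i. (x + a i) mod n) ` F |x F. x < n \<and> F \<in> K}"
    then obtain x F where xF: "x < n" "F \<in> K" "G = (\<lambda>i. (x + a i) mod n) ` F" by blast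
    show "finite G" using xF Kfin by simp
    show "G \<noteq> {}" using xF Kfin by simp
    fix H assume H: "H \<subseteq> G \<and> H \<noteq> {}"
    define F' where "F' = {i \<in> F. (x + a i) mod n \<in> H}"
    have "F' \<subseteq> F" "F' \<noteq> {}" using H xF unfolding F'_def by auto
    then have "F' \<in> K" using SCr xF by blast
    moreover have "H = (\<lambda>i. (x + a i) mod n) ` F'" using H xF unfolding F'_def by auto
    ultimately show "H \<in> {(\<lambda>i. (x + a i) mod n) ` F |x F. x < n \<and> F \<in> K}" using xF by blast
  qed
  have finK: "finite K"
  proof -
    have "K \<subseteq> Pow {1..d}" using Ksub by blast
    thus ?thesis using finite_subset by blast
  qed
  have finX: "finite (lift_complex n a K)"
    unfolding X P_def using finK by simp
  have iso: "isomorphic_complex (P x) K" if "x < n" for x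
  proof -
    define g where "g = (\<lambda>i. (x + a i) mod n)"
    have ginj: "inj_on g {1..d}"
      unfolding inj_on_def g_def using same_base alt ainj unfolding inj_on_def by blast
    define h where "h = the_inv_into {1..d} g"
    have bij: "bij_betw h (V x) {1..d}"
      unfolding h_def V_def g_def[symmetric] using bij_betw_the_inv_into ginj inj_on_imp_bij_betw by blast
    have hg: "h ` (g ` F) = F" if "F \<in> K" for F
    proof -
      have "h ` (g ` F) = (h \<circ> g) ` F" by (simp add: image_comp)
      also have "\<dots> = F"
      proof -
        have "h (g i) = i" if "i \<in> F" for i
          using the_inv_into_f_f[OF ginj] Ksub[OF \<open>F \<in> K\<close>] that unfolding h_def by blast
        then show ?thesis by simp
      qed
      finally show ?thesis .
    qed
    have "(\<lambda>F. h ` F) ` P x = K"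
    proof -
      have "(\<lambda>F. h ` F) ` P x = (\<lambda>F. h ` (g ` F)) ` K" unfolding P_def g_def by (simp add: image_comp)
      also have "\<dots> = K" using hg by simp
      finally show ?thesis .
    qed
    then show ?thesis unfolding isomorphic_complex_def vertP assms(3) using bij by blast
  qed
  have "is_cluster (lift_complex n a K) P n"
    unfolding is_cluster_def
  proof (intro conjI scX finX X allI impI)
    show "\<And>i. i < n \<Longrightarrow> induced_subcomplex (P i) (lift_complex n a K)" using ind by blast
    show "\<And>i j. i < n \<Longrightarrow> j < n \<Longrightarrow> i \<noteq> j \<Longrightarrow> P i \<inter> P j = {} \<or> (\<exists>v. P i \<inter> P j = {{v}})"
      using inter by blast
  qed
  then show ?thesis using iso by blast
qed

end
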